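(* Let $(X,G)$ be a minimal topological dynamical system. If $F\in 2^X$ satisfies $V(F)=\pi_{eq}(F)$, then $F$ has the interior saturation property, i.e. $\pi_{eq}^{-1}(\mathrm{int}(\pi_{eq}(F)))\subset F$.
   Context: $G$ is an infinite countable discrete group; a tds $(X,G)$ is a compact metric space with a $G$-action by homeomorphisms; minimal means no proper nonempty closed invariant subset. $\pi_{eq}:X\to X_{eq}$ is the factor map onto the maximal equicontinuous factor, $\nu_{eq}$ the unique invariant probability measure of $(X_{eq},G)$. $2^X$ is the space of nonempty closed subsets with the Hausdorff metric $d_H$. $\mathcal X=\overline{\{\pi_{eq}^{-1}(y):y\in X_{eq}\}}\subset 2^X$; for $E\in\mathcal X$, $\pi_{\mathcal X}(E)$ is the single point $\pi_{eq}(E)$. $\mathcal X_{eq}^{\mathrm{meas}}=\{E\in\mathcal X:\nu_{eq}(\pi_{\mathcal X}(B^{\mathcal X}_\epsilon(E)))>0\ \forall\epsilon>0\}$, $B^{\mathcal X}_\epsilon(E)$ the open $d_H$-ball in $\mathcal X$. For $F\in 2^X$, $V(F)=\{y\in X_{eq}:\exists E\in\mathcal X_{eq}^{\mathrm{meas}}, E\subset F,\ \pi_{\mathcal X}(E)=y\}$. *)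

theory Defs
  imports "HOL-Analysis.Analysis" "HOL-Probability.Probability" "HOL-Algebra.Group"
begin

definition hausdist :: "'a::metric_space set \<Rightarrow> 'a set \<Rightarrow> real" where
  "hausdist A B = max (SUP a\<in>A. infdist a B) (SUP b\<in>B. infdist b A)"

definition tds :: "('g, 'm) monoid_scheme \<Rightarrow> 'a::metric_space set \<Rightarrow> ('g \<Rightarrow> 'a \<Rightarrow> 'a) \<Rightarrow> bool" where
  "tds G X act \<longleftrightarrow> group G \<and> countable (carrier G) \<and> infinite (carrier G)
     \<and> compact X \<and> X \<noteq> {}
     \<and> (\<forall>g\<in>carrier G. continuous_on X (act g) \<and> act g ` X \<subseteq> X)
     \<and> (\<forall>x\<in>X. act \<one>\<^bsub>G\<^esub> x = x)
     \<and> (\<forall>g\<in>carrier G. \<forall>h\<in>carrier G. \<forall>x\<in>X. act (g \<otimes>\<^bsub>G\<^esub> h) x = act g (act h x))"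

definition minimal_tds :: "('g, 'm) monoid_scheme \<Rightarrow> 'a::metric_space set \<Rightarrow> ('g \<Rightarrow> 'a \<Rightarrow> 'a) \<Rightarrow> bool" where
  "minimal_tds G X act \<longleftrightarrow> tds G X act \<and>
     (\<forall>Y. closed Y \<and> Y \<subseteq> X \<and> Y \<noteq> {} \<and> (\<forall>g\<in>carrier G. act g ` Y \<subseteq> Y) \<longrightarrow> Y = X)"

definition equicontinuous_tds :: "('g, 'm) monoid_scheme \<Rightarrow> 'a::metric_space set \<Rightarrow> ('g \<Rightarrow> 'a \<Rightarrow> 'a) \<Rightarrow> bool" where
  "equicontinuous_tds G Y act \<longleftrightarrow> tds G Y act \<and>
     (\<forall>e>0. \<exists>d>0. \<forall>g\<in>carrier G. \<forall>y\<in>Y. \<forall>y'\<in>Y. dist y y' < d \<longrightarrow> dist (act g y) (act g y') < e)"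

definition factor_map :: "('g, 'm) monoid_scheme \<Rightarrow> 'a::metric_space set \<Rightarrow> ('g \<Rightarrow> 'a \<Rightarrow> 'a)
     \<Rightarrow> 'b::metric_space set \<Rightarrow> ('g \<Rightarrow> 'b \<Rightarrow> 'b) \<Rightarrow> ('a \<Rightarrow> 'b) \<Rightarrow> bool" where
  "factor_map G X act Y actY p \<longleftrightarrow> tds G X act \<and> tds G Y actY \<and>
     continuous_on X p \<and> p ` X = Y \<and>
     (\<forall>g\<in>carrier G. \<forall>x\<in>X. p (act g x) = actY g (p x))"

(* Every compact metric space embeds in the
   Hilbert cube, so it suffices to quantify over factors living in nat \<Rightarrow> real
   (product topology / metric from HOL-Analysis.Function_Metric). *)
definition max_equicontinuous_factor :: "('g, 'm) monoid_scheme \<Rightarrow> 'a::metric_space set \<Rightarrow> ('g \<Rightarrow> 'a \<Rightarrow> 'a)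
     \<Rightarrow> 'b::metric_space set \<Rightarrow> ('g \<Rightarrow> 'b \<Rightarrow> 'b) \<Rightarrow> ('a \<Rightarrow> 'b) \<Rightarrow> bool" where
  "max_equicontinuous_factor G X act Y actY p \<longleftrightarrow>
     factor_map G X act Y actY p \<and> equicontinuous_tds G Y actY \<and>
     (\<forall>(Z :: (nat \<Rightarrow> real) set) actZ q.
        factor_map G X act Z actZ q \<and> equicontinuous_tds G Z actZ \<longrightarrow>
        (\<exists>f. continuous_on Y f \<and> (\<forall>x\<in>X. q x = f (p x))))"

definition invariant_prob :: "('g, 'm) monoid_scheme \<Rightarrow> 'b::metric_space set \<Rightarrow> ('g \<Rightarrow> 'b \<Rightarrow> 'b)
     \<Rightarrow> 'b measure \<Rightarrow> bool" where
  "invariant_prob G Y actY \<nu> \<longleftrightarrow> prob_space \<nu> \<and> space \<nu> = Y \<and>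
     sets \<nu> = sets (restrict_space borel Y) \<and>
     (\<forall>g\<in>carrier G. \<forall>A\<in>sets \<nu>. measure \<nu> (actY g -` A \<inter> Y) = measure \<nu> A)"

definition hyperspace :: "'a::metric_space set \<Rightarrow> 'a set set" where
  "hyperspace X = {F. F \<noteq> {} \<and> closed F \<and> F \<subseteq> X}"

definition fibre_closure :: "'a::metric_space set \<Rightarrow> 'b set \<Rightarrow> ('a \<Rightarrow> 'b) \<Rightarrow> 'a set set" where
  "fibre_closure X Y p = {E \<in> hyperspace X.
     \<forall>e>0. \<exists>y\<in>Y. hausdist E (p -` {y} \<inter> X) < e}"

definition pi_X :: "('a \<Rightarrow> 'b) \<Rightarrow> 'a set \<Rightarrow> 'b" where
  "pi_X p E = the_elem (p ` E)"

definition XBall :: "'a::metric_space set \<Rightarrow> 'b set \<Rightarrow> ('a \<Rightarrow> 'b) \<Rightarrow> 'a set \<Rightarrow> real \<Rightarrow> 'a set set" where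
  "XBall X Y p E e = {E' \<in> fibre_closure X Y p. hausdist E E' < e}"

definition Xeq_meas :: "'a::metric_space set \<Rightarrow> 'b set \<Rightarrow> ('a \<Rightarrow> 'b) \<Rightarrow> 'b measure \<Rightarrow> 'a set set" where
  "Xeq_meas X Y p \<nu> = {E \<in> fibre_closure X Y p.
     \<forall>e>0. measure \<nu> (pi_X p ` XBall X Y p E e) > 0}"

definition V_set :: "'a::metric_space set \<Rightarrow> 'b set \<Rightarrow> ('a \<Rightarrow> 'b) \<Rightarrow> 'b measure \<Rightarrow> 'a set \<Rightarrow> 'b set" where
  "V_set X Y p \<nu> F = {y \<in> Y. \<exists>E\<in>Xeq_meas X Y p \<nu>. E \<subseteq> F \<and> pi_X p E = y}"

end

theory Submission
  imports Defs
begin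

lemma hd_close:
  fixes A B :: "'a::metric_space set"
  assumes "hausdist A B < e" "A \<noteq> {}" "B \<noteq> {}" "bounded A" "bounded B"
  shows "(\<forall>a\<in>A. \<exists>b\<in>B. dist a b < e) \<and> (\<forall>b\<in>B. \<exists>a\<in>A. dist a b < e)"
proof -
  have inf_lt: "\<exists>b\<in>B'. dist a b < e" if "infdist a B' < e" "B' \<noteq> {}" for a and B' :: "'a set"
  proof -
    have "(INF b\<in>B'. dist a b) < e" using that infdist_notempty by metis
    then show ?thesis using that(2)
      by (subst (asm) cINF_less_iff) (auto intro: bdd_belowI[of _ 0])
  qed
  have sup_le: "infdist a B' \<le> (SUP a\<in>A'. infdist a B')"
    if aA: "a \<in> A'" and bA: "bounded A'" and neB: "B' \<noteq> {}" for a and A' B' :: "'a set"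
  proof -
    obtain b0 where b0: "b0 \<in> B'" using neB by blast
    obtain M where M: "\<forall>y\<in>A'. dist b0 y \<le> M" using bA bounded_any_center by blast
    have "bdd_above ((\<lambda>a. infdist a B') ` A')"
    proof (rule bdd_aboveI[of _ M])
      fix t assume "t \<in> (\<lambda>a. infdist a B') ` A'"
      then obtain a' where "a' \<in> A'" "t = infdist a' B'" by blast
      then show "t \<le> M" using infdist_le[OF b0, of a'] M by (auto simp: dist_commute)
    qed
    then show ?thesis using aA by (rule cSUP_upper2) auto
  qed
  show ?thesis
  proof safe
    fix a assume "a \<in> A"
    have "infdist a B < e" using sup_le[OF \<open>a\<in>A\<close> assms(4,3)] assms(1)
      unfolding hausdist_def by linarith
    then show "\<exists>b\<in>B. dist a b < e" using inf_lt assms(3) by blast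
  next
    fix b assume "b \<in> B"
    have "infdist b A < e" using sup_le[OF \<open>b\<in>B\<close> assms(5,2)] assms(1)
      unfolding hausdist_def by linarith
    then obtain a where "a \<in> A" "dist b a < e" using inf_lt[of b A] assms(2) by blast
    then show "\<exists>a\<in>A. dist a b < e" by (metis dist_commute)
  qed
qed

lemma finite_closed_cover:
  assumes "finite K" "openin (top_of_set Y) W" "W \<noteq> {}" "W \<subseteq> (\<Union>g\<in>K. A g)"
     "\<forall>g\<in>K. closed (A g)"
  shows "\<exists>g\<in>K. \<exists>S. openin (top_of_set Y) S \<and> S \<noteq> {} \<and> S \<subseteq> A g"
  using assms
proof (induction K arbitrary: W rule: finite_induct)
  case empty
  then have False by simp
  then show ?case ..
next
  case (insert g K)
  show ?case
  proof (cases "W \<subseteq> A g")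
    case True
    have "openin (top_of_set Y) W \<and> W \<noteq> {} \<and> W \<subseteq> A g"
      using True insert.prems(1,2) by simp
    then have "\<exists>S. openin (top_of_set Y) S \<and> S \<noteq> {} \<and> S \<subseteq> A g" by (rule exI[of _ W])
    then show ?thesis by (rule bexI[of _ g]) simp
  next
    case False
    have "W - A g = W - (Y \<inter> A g)" using insert.prems(1) by (auto dest: openin_imp_subset)
    moreover have "openin (top_of_set Y) (W - (Y \<inter> A g))"
      using insert.prems by (intro openin_diff closedin_closed_Int) auto
    ultimately have "openin (top_of_set Y) (W - A g)" by simp
    moreover have "W - A g \<noteq> {}" using False by blast
    moreover have "W - A g \<subseteq> (\<Union>g\<in>K. A g)" using insert.prems by blast
    ultimately obtain h S where "h \<in> K" "openin (top_of_set Y) S" "S \<noteq> {}" "S \<subseteq> A h"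
      using insert.IH[of "W - A g"] insert.prems(4) by auto
    then show ?thesis by (intro bexI[of _ h]) auto
  qed
qed


theorem lemma3p6:
  fixes G :: "('g, 'm) monoid_scheme"
    and X :: "'a::metric_space set" and act :: "'g \<Rightarrow> 'a \<Rightarrow> 'a"
    and Xeq :: "'b::metric_space set" and acteq :: "'g \<Rightarrow> 'b \<Rightarrow> 'b"
    and peq :: "'a \<Rightarrow> 'b" and \<nu> :: "'b measure" and F :: "'a set"
  assumes "minimal_tds G X act"
    and "max_equicontinuous_factor G X act Xeq acteq peq"
    and "invariant_prob G Xeq acteq \<nu>"
    and "F \<in> hyperspace X"
    and "V_set X Xeq peq \<nu> F = peq ` F"
  shows "peq -` ((subtopology euclidean Xeq) interior_of (peq ` F)) \<inter> X \<subseteq> F"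
proof
  have tdsX: "tds G X act" and mini: "\<And>Y. closed Y \<Longrightarrow> Y \<subseteq> X \<Longrightarrow> Y \<noteq> {}
      \<Longrightarrow> (\<forall>g\<in>carrier G. act g ` Y \<subseteq> Y) \<Longrightarrow> Y = X"
    using assms(1) unfolding minimal_tds_def by auto
  have fm: "factor_map G X act Xeq acteq peq"
    using assms(2) unfolding max_equicontinuous_factor_def by auto
  have tdsY: "tds G Xeq acteq" and contp: "continuous_on X peq" and imp: "peq ` X = Xeq"
    and equi: "\<And>g z. g \<in> carrier G \<Longrightarrow> z \<in> X \<Longrightarrow> peq (act g z) = acteq g (peq z)"
    using fm unfolding factor_map_def by auto
  have grp: "group G" and cX: "compact X" and
    actc: "\<And>g. g \<in> carrier G \<Longrightarrow> continuous_on X (act g)" and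
    actX: "\<And>g z. g \<in> carrier G \<Longrightarrow> z \<in> X \<Longrightarrow> act g z \<in> X" and
    act1: "\<And>z. z \<in> X \<Longrightarrow> act \<one>\<^bsub>G\<^esub> z = z" and
    actm: "\<And>g h z. g \<in> carrier G \<Longrightarrow> h \<in> carrier G \<Longrightarrow> z \<in> X \<Longrightarrow>
       act (g \<otimes>\<^bsub>G\<^esub> h) z = act g (act h z)"
    using tdsX unfolding tds_def by auto
  have cY: "compact Xeq" and neY: "Xeq \<noteq> {}" and
    acteqc: "\<And>g. g \<in> carrier G \<Longrightarrow> continuous_on Xeq (acteq g)" and
    acteqY: "\<And>g z. g \<in> carrier G \<Longrightarrow> z \<in> Xeq \<Longrightarrow> acteq g z \<in> Xeq" and
    acteq1: "\<And>z. z \<in> Xeq \<Longrightarrow> acteq \<one>\<^bsub>G\<^esub> z = z" and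
    acteqm: "\<And>g h z. g \<in> carrier G \<Longrightarrow> h \<in> carrier G \<Longrightarrow> z \<in> Xeq \<Longrightarrow>
       acteq (g \<otimes>\<^bsub>G\<^esub> h) z = acteq g (acteq h z)"
    using tdsY unfolding tds_def by auto
  have inv_l: "acteq (inv\<^bsub>G\<^esub> g) (acteq g w) = w" if "g \<in> carrier G" "w \<in> Xeq" for g w
  proof -
    have "acteq (inv\<^bsub>G\<^esub> g) (acteq g w) = acteq (inv\<^bsub>G\<^esub> g \<otimes>\<^bsub>G\<^esub> g) w"
      using acteqm[of "inv\<^bsub>G\<^esub> g" g w] that group.inv_closed[OF grp] by simp
    also have "\<dots> = w" using group.l_inv[OF grp that(1)] acteq1 that(2) by simp
    finally show ?thesis .
  qed
  have inv_r: "acteq g (acteq (inv\<^bsub>G\<^esub> g) w) = w" if "g \<in> carrier G" "w \<in> Xeq" for g w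
  proof -
    have "acteq g (acteq (inv\<^bsub>G\<^esub> g) w) = acteq (g \<otimes>\<^bsub>G\<^esub> inv\<^bsub>G\<^esub> g) w"
      using acteqm[of g "inv\<^bsub>G\<^esub> g" w] that group.inv_closed[OF grp] by simp
    also have "\<dots> = w" using group.r_inv[OF grp that(1)] acteq1 that(2) by simp
    finally show ?thesis .
  qed
  have neF: "F \<noteq> {}" and clF: "closed F" and FX: "F \<subseteq> X"
    using assms(4) unfolding hyperspace_def by auto
  have bX: "bounded X" using cX by (rule compact_imp_bounded)
  have fibne: "peq -` {y} \<inter> X \<noteq> {}" if "y \<in> Xeq" for y
    using that imp by auto
  have uc: "uniformly_continuous_on X peq" using contp cX by (rule compact_uniformly_continuous)
  then have ucd: "\<And>e. e > 0 \<Longrightarrow> \<exists>d>0. \<forall>a\<in>X. \<forall>b\<in>X. dist b a < d \<longrightarrow> dist (peq b) (peq a) < e"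
    unfolding uniformly_continuous_on_def by blast

  fix x assume xin: "x \<in> peq -` ((subtopology euclidean Xeq) interior_of (peq ` F)) \<inter> X"
  then have xX: "x \<in> X" by simp
  from xin obtain T where T: "openin (top_of_set Xeq) T" "peq x \<in> T" "T \<subseteq> peq ` F"
    unfolding interior_of_def by auto
  then obtain U where U: "open U" "T = Xeq \<inter> U" unfolding openin_open by auto
  then obtain eU where eU: "eU > 0" "ball (peq x) eU \<subseteq> U" using T(2) open_contains_ball by blast
  obtain \<delta> where \<delta>: "\<delta> > 0" "\<forall>x'\<in>X. dist x' x < \<delta> \<longrightarrow> dist (peq x') (peq x) < eU"
    using contp xX eU(1) unfolding continuous_on_iff by blast
  have nearT: "peq x' \<in> peq ` F" if "x' \<in> X" "dist x' x < \<delta>" for x'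
  proof -
    have "peq x' \<in> U" using \<delta>(2) that eU(2) by (auto simp: dist_commute)
    moreover have "peq x' \<in> Xeq" using that(1) imp by auto
    ultimately show ?thesis using T(3) U(2) by auto
  qed
  show "x \<in> F"
  proof (rule ccontr)
    assume "x \<notin> F"
    then obtain r where r: "r > 0" "ball x r \<subseteq> - F"
      using clF open_contains_ball[of "- F"] by (auto simp: closed_def)
    define \<rho> where "\<rho> = min r \<delta> / 2"
    have \<rho>: "\<rho> > 0" "\<rho> \<le> r / 2" "\<rho> < \<delta>" using r \<delta> unfolding \<rho>_def by auto
    define C where "C = X \<inter> cball x \<rho>"
    have cC: "compact C" unfolding C_def using cX by auto
    have CX: "C \<subseteq> X" unfolding C_def by auto
    (* minimality: every orbit enters ball x rho *)
    define Z where "Z = X \<inter> (\<Inter>g\<in>carrier G. X \<inter> act g -` (- ball x \<rho>))"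
    have clZ: "closed Z" unfolding Z_def
    proof (rule closed_Int)
      show "closed X" using cX by (rule compact_imp_closed)
      show "closed (\<Inter>g\<in>carrier G. X \<inter> act g -` (- ball x \<rho>))"
      proof (rule closed_INT, rule ballI)
        fix g assume "g \<in> carrier G"
        then show "closed (X \<inter> act g -` (- ball x \<rho>))"
          using actc \<open>closed X\<close> by (intro continuous_closed_preimage) auto
      qed
    qed
    have Zm: "z \<in> Z \<longleftrightarrow> z \<in> X \<and> (\<forall>g\<in>carrier G. act g z \<notin> ball x \<rho>)" for z
      unfolding Z_def by (auto simp del: mem_ball)
    have invZ: "\<forall>h\<in>carrier G. act h ` Z \<subseteq> Z"
    proof (intro ballI subsetI)
      fix h w assume h: "h \<in> carrier G" and "w \<in> act h ` Z"
      then obtain z where z: "z \<in> Z" "w = act h z" by auto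
      have zX: "z \<in> X" using z(1) Zm by auto
      have "act g w \<notin> ball x \<rho>" if g: "g \<in> carrier G" for g
      proof -
        have gh: "g \<otimes>\<^bsub>G\<^esub> h \<in> carrier G" using g h grp by (simp add: group.subgroupE(4) group.subgroup_self)
        have "act g w = act (g \<otimes>\<^bsub>G\<^esub> h) z" using actm[OF g h zX] z(2) by simp
        then show ?thesis using z(1) gh Zm by metis
      qed
      moreover have "w \<in> X" using actX[OF h zX] z(2) by simp
      ultimately show "w \<in> Z" using Zm by auto
    qed
    have one: "\<one>\<^bsub>G\<^esub> \<in> carrier G" by (rule monoid.one_closed[OF group.is_monoid[OF grp]])
    have "act \<one>\<^bsub>G\<^esub> x \<in> ball x \<rho>" using act1[OF xX] \<rho>(1) by simp
    then have "x \<notin> Z" using one Zm by blast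
    then have "Z \<noteq> X" using xX by auto
    moreover have "Z \<subseteq> X" using Zm by auto
    ultimately have Ze: "Z = {}" using mini[OF clZ _ _ invZ] by auto
    have orb: "\<exists>g\<in>carrier G. act g z \<in> ball x \<rho>" if "z \<in> X" for z
      using that Ze Zm by auto
    have "\<forall>g\<in>carrier G. \<exists>A. open A \<and> A \<inter> X = act g -` ball x \<rho> \<inter> X"
      using actc unfolding continuous_on_open_invariant by auto
    then obtain U' where U': "\<And>g. g \<in> carrier G \<Longrightarrow> open (U' g) \<and> U' g \<inter> X = act g -` ball x \<rho> \<inter> X"
      by metis
    have "X \<subseteq> (\<Union>g\<in>carrier G. U' g)"
    proof
      fix z assume z: "z \<in> X"
      then obtain g where "g \<in> carrier G" "act g z \<in> ball x \<rho>" using orb by blast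
      then have "z \<in> U' g" using U'[of g] z by auto
      then show "z \<in> (\<Union>g\<in>carrier G. U' g)" using \<open>g \<in> carrier G\<close> by auto
    qed
    then obtain K where K: "K \<subseteq> carrier G" "finite K" "X \<subseteq> (\<Union>g\<in>K. U' g)"
      using compactE_image[OF cX, of "carrier G" U'] U' by metis
    define Ag where "Ag g = acteq (inv\<^bsub>G\<^esub> g) ` (peq ` C)" for g
    have pCY: "peq ` C \<subseteq> Xeq" using CX imp by auto
    have clA: "\<forall>g\<in>K. closed (Ag g)"
    proof
      fix g assume "g \<in> K"
      then have "g \<in> carrier G" using K(1) by auto
      then have ig: "inv\<^bsub>G\<^esub> g \<in> carrier G" by (rule group.inv_closed[OF grp])
      have "continuous_on C peq" using contp CX by (rule continuous_on_subset)
      then have "compact (peq ` C)" using cC by (rule compact_continuous_image)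
      moreover have "continuous_on (peq ` C) (acteq (inv\<^bsub>G\<^esub> g))"
        using acteqc[OF ig] pCY by (rule continuous_on_subset)
      ultimately have "compact (Ag g)" unfolding Ag_def by (rule compact_continuous_image[rotated])
      then show "closed (Ag g)" by (rule compact_imp_closed)
    qed
    have covY: "Xeq \<subseteq> (\<Union>g\<in>K. Ag g)"
    proof
      fix w assume "w \<in> Xeq"
      then obtain z where z: "z \<in> X" "w = peq z" using imp by auto
      then obtain g where g: "g \<in> K" "z \<in> U' g" using K(3) by auto
      have gG: "g \<in> carrier G" using g(1) K(1) by auto
      have "act g z \<in> ball x \<rho>" using U'[OF gG] g(2) z(1) by auto
      then have "act g z \<in> C" using actX[OF gG z(1)] unfolding C_def by auto
      moreover have "acteq (inv\<^bsub>G\<^esub> g) (peq (act g z)) = w"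
        using equi[OF gG z(1)] inv_l[OF gG] z imp by auto
      ultimately have "w \<in> Ag g" unfolding Ag_def by (metis image_eqI)
      then show "w \<in> (\<Union>g\<in>K. Ag g)" using g(1) by auto
    qed
    obtain g S where g: "g \<in> K" and S: "openin (top_of_set Xeq) S" "S \<noteq> {}" "S \<subseteq> Ag g"
      using finite_closed_cover[OF K(2) openin_subtopology_self[of Xeq] neY covY clA]
      by auto
    have gG: "g \<in> carrier G" using g K(1) by auto
    have ig: "inv\<^bsub>G\<^esub> g \<in> carrier G" using gG by (rule group.inv_closed[OF grp])
    define S' where "S' = Xeq \<inter> acteq (inv\<^bsub>G\<^esub> g) -` S"
    have S'o: "openin (top_of_set Xeq) S'" unfolding S'_def
      using acteqc[OF ig] acteqY[OF ig] S(1) by (intro continuous_openin_preimage) auto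
    obtain s where s: "s \<in> S" using S(2) by auto
    have sY: "s \<in> Xeq" using s S(1) openin_imp_subset by fastforce
    have "acteq g s \<in> S'" unfolding S'_def using acteqY[OF gG sY] inv_l[OF gG sY] s by auto
    then obtain y' where y': "y' \<in> S'" by blast
    have S'C: "S' \<subseteq> peq ` C"
    proof
      fix w assume w: "w \<in> S'"
      then have wY: "w \<in> Xeq" and "acteq (inv\<^bsub>G\<^esub> g) w \<in> Ag g" using S(3) unfolding S'_def by auto
      then obtain v where v: "v \<in> peq ` C" "acteq (inv\<^bsub>G\<^esub> g) w = acteq (inv\<^bsub>G\<^esub> g) v"
        unfolding Ag_def by auto
      have "w = v" using inv_r[OF gG wY] inv_r[OF gG, of v] v pCY by auto
      then show "w \<in> peq ` C" using v by simp
    qed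
    have y'Y: "y' \<in> Xeq" using y' unfolding S'_def by auto
    obtain c0 where c0: "c0 \<in> C" "y' = peq c0" using y' S'C by auto
    have "peq c0 \<in> peq ` F" using c0 CX \<rho>(3) unfolding C_def by (intro nearT) (auto simp: dist_commute)
    then have "y' \<in> V_set X Xeq peq \<nu> F" using assms(5) c0 by simp
    then obtain E where E: "E \<in> Xeq_meas X Xeq peq \<nu>" "E \<subseteq> F" "pi_X peq E = y'"
      unfolding V_set_def by auto
    then have Efc: "E \<in> fibre_closure X Xeq peq" unfolding Xeq_meas_def by auto
    then have neE: "E \<noteq> {}" and EX: "E \<subseteq> X"
      and Eapp: "\<And>e. e > 0 \<Longrightarrow> \<exists>y\<in>Xeq. hausdist E (peq -` {y} \<inter> X) < e"
      unfolding fibre_closure_def hyperspace_def by auto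
    have bE: "bounded E" using bX EX by (rule bounded_subset)
    have bfib: "bounded (peq -` {y} \<inter> X)" for y using bX by (rule bounded_subset) auto
    have close: "(\<forall>a\<in>E. \<exists>b\<in>peq -` {y} \<inter> X. dist a b < e) \<and> (\<forall>b\<in>peq -` {y} \<inter> X. \<exists>a\<in>E. dist a b < e)"
      if "y \<in> Xeq" "hausdist E (peq -` {y} \<inter> X) < e" for y e
      using hd_close[OF that(2) neE fibne[OF that(1)] bE bfib] .
    have sing: "peq e1 = peq e2" if e1: "e1 \<in> E" and e2: "e2 \<in> E" for e1 e2
    proof (rule ccontr)
      assume ne: "peq e1 \<noteq> peq e2"
      define \<eta>0 where "\<eta>0 = dist (peq e1) (peq e2) / 2"
      have "\<eta>0 > 0" using ne unfolding \<eta>0_def by simp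
      then obtain \<kappa> where \<kappa>: "\<kappa> > 0" "\<forall>a\<in>X. \<forall>b\<in>X. dist b a < \<kappa> \<longrightarrow> dist (peq b) (peq a) < \<eta>0"
        using ucd by blast
      obtain y where y: "y \<in> Xeq" "hausdist E (peq -` {y} \<inter> X) < \<kappa>" using Eapp[OF \<kappa>(1)] by blast
      obtain z1 where z1: "z1 \<in> X" "peq z1 = y" "dist e1 z1 < \<kappa>" using close[OF y] e1 by auto
      obtain z2 where z2: "z2 \<in> X" "peq z2 = y" "dist e2 z2 < \<kappa>" using close[OF y] e2 by auto
      have "dist (peq z1) (peq e1) < \<eta>0" using \<kappa>(2) z1 e1 EX by (auto simp: dist_commute)
      moreover have "dist (peq z2) (peq e2) < \<eta>0" using \<kappa>(2) z2 e2 EX by (auto simp: dist_commute)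
      ultimately have "dist (peq e1) (peq e2) < 2 * \<eta>0" using z1(2) z2(2) dist_triangle[of "peq e1" "peq e2" y]
        by (simp add: dist_commute)
      then show False unfolding \<eta>0_def by simp
    qed
    obtain e0 where e0: "e0 \<in> E" using neE by auto
    have "peq ` E = {peq e0}"
    proof
      show "peq ` E \<subseteq> {peq e0}"
      proof
        fix w assume "w \<in> peq ` E"
        then obtain e where e: "e \<in> E" "w = peq e" by auto
        show "w \<in> {peq e0}" using e(2) by (simp add: sing[OF e(1) e0])
      qed
      show "{peq e0} \<subseteq> peq ` E" using e0 by simp
    qed
    then have pe0: "peq e0 = y'" using E(3) unfolding pi_X_def by simp
    obtain \<eta> where \<eta>: "\<eta> > 0" "ball y' \<eta> \<inter> Xeq \<subseteq> S'"
      using S'o y' unfolding openin_contains_ball by blast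
    obtain \<kappa> where \<kappa>: "\<kappa> > 0" "\<forall>a\<in>X. \<forall>b\<in>X. dist b a < \<kappa> \<longrightarrow> dist (peq b) (peq a) < \<eta>"
      using ucd \<eta>(1) by blast
    define \<epsilon> where "\<epsilon> = min \<kappa> (r / 2)"
    have \<epsilon>: "\<epsilon> > 0" "\<epsilon> \<le> \<kappa>" "\<epsilon> \<le> r / 2" using \<kappa> r unfolding \<epsilon>_def by auto
    obtain y where y: "y \<in> Xeq" "hausdist E (peq -` {y} \<inter> X) < \<epsilon>" using Eapp[OF \<epsilon>(1)] by blast
    obtain z where z: "z \<in> X" "peq z = y" "dist e0 z < \<epsilon>" using close[OF y] e0 by auto
    have "dist (peq z) (peq e0) < \<eta>" using \<kappa>(2) z e0 EX \<epsilon>(2) by (auto simp: dist_commute)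
    then have "y \<in> ball y' \<eta> \<inter> Xeq" using z(2) pe0 y(1) by (auto simp: dist_commute)
    then have "y \<in> peq ` C" using \<eta>(2) S'C by auto
    then obtain c where c: "c \<in> C" "peq c = y" by auto
    then have "c \<in> peq -` {y} \<inter> X" using CX by auto
    then obtain e where e: "e \<in> E" "dist e c < \<epsilon>" using close[OF y] by blast
    have "dist c x \<le> \<rho>" using c(1) unfolding C_def by (auto simp: dist_commute)
    then have "dist x e < r" using e(2) \<epsilon>(3) \<rho>(2) dist_triangle[of e x c]
      by (simp add: dist_commute)
    then have "e \<in> ball x r" by simp
    then show False using r(2) e(1) E(2) by auto
  qed
qed

end
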